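(* For any $z\in\mathbb{R}^d$, $R>0$, $x\in B_{d,1}(z,R)$ and $0\le r\le 2R/(d+2)$, $$\lambda\big[B_{d,1}(z,R)\cap B_{d,2}(x,r)\big]\ge\frac{V_{d,1}}{V_{d,2}\,2^d}\,\lambda\big[B_{d,2}(x,r)\big].$$
   Context: $\lambda$ is Lebesgue measure on $\mathbb{R}^d$. For $p\ge1$, $B_{d,p}(x,r)=\{y\in\mathbb{R}^d:\sum_{j=1}^d|y_j-x_j|^p\le r^p\}$ is the closed $\ell_p$ ball, and $V_{d,p}=\lambda[B_{d,p}(0,1)]$. *)

theory Defs
  imports "HOL-Analysis.Analysis"
begin

text \<open>Closed l_p ball in R^d, with R^d rendered as real^'n (d = CARD('n)).\<close>
definition lp_ball :: "real \<Rightarrow> real^'n \<Rightarrow> real \<Rightarrow> (real^'n) set" where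
  "lp_ball p x r = {y. (\<Sum>j\<in>UNIV. \<bar>y $ j - x $ j\<bar> powr p) \<le> r powr p}"

definition lp_vol :: "real \<Rightarrow> ('n::finite) itself \<Rightarrow> real" where
  "lp_vol p _ = measure lborel (lp_ball p (0::real^'n::finite) 1)"

end

theory Submission
  imports Defs
begin

definition n1 :: "real^'n \<Rightarrow> real" where "n1 v = (\<Sum>j\<in>UNIV. \<bar>v $ j\<bar>)"

lemma n1_add: "n1 (a + b) \<le> n1 a + n1 b"
  unfolding n1_def sum.distrib[symmetric] by (rule sum_mono) (simp add: abs_triangle_ineq)

lemma n1_scale: "n1 (c *\<^sub>R v) = \<bar>c\<bar> * n1 v"
  unfolding n1_def by (simp add: abs_mult sum_distrib_left)

lemma n1_minus: "n1 (a - b) = n1 (b - a)"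
  unfolding n1_def by (simp add: abs_minus_commute)

lemma norm_le_n1: "norm v \<le> n1 v"
  unfolding n1_def by (rule norm_le_l1_cart)

lemma lp1: "r \<ge> 0 \<Longrightarrow> lp_ball 1 x r = {y. n1 (y - x) \<le> r}"
  unfolding lp_ball_def n1_def by simp

lemma lp2: "r \<ge> 0 \<Longrightarrow> lp_ball 2 x r = cball x r"
proof -
  assume r: "r \<ge> 0"
  have "y \<in> lp_ball 2 x r \<longleftrightarrow> y \<in> cball x r" for y
  proof -
    have e: "\<bar>t\<bar> powr 2 = t^2" for t :: real
      by (simp add: powr_numeral)
    have "dist x y = sqrt (\<Sum>j\<in>UNIV. (y $ j - x $ j)^2)"
      unfolding dist_norm norm_vec_def L2_set_def
      by (simp add: power2_commute)
    moreover have "r powr 2 = r^2" using r by (simp add: powr_numeral)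
    ultimately show ?thesis
      unfolding lp_ball_def mem_Collect_eq e mem_cball
      using r by (metis real_le_lsqrt real_sqrt_le_iff real_sqrt_unique sum_nonneg zero_le_power2
          real_le_rsqrt)
  qed
  then show ?thesis by blast
qed

lemma closed_lp1: "closed {y::real^'n. n1 (y - x) \<le> r}"
  unfolding n1_def by (intro closed_Collect_le continuous_intros)

lemma lp1_scale:
  assumes "\<rho> > 0"
  shows "{y::real^'n. n1 (y - w) \<le> \<rho>} = (\<lambda>y. \<rho> *\<^sub>R y + w) ` {y. n1 (y - 0) \<le> 1}"
proof (intro set_eqI iffI)
  fix y assume "y \<in> {y::real^'n. n1 (y - w) \<le> \<rho>}"
  then have h: "n1 (y - w) \<le> \<rho>" by simp
  let ?u = "(1/\<rho>) *\<^sub>R (y - w)"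
  have "n1 (?u - 0) = n1 (y - w) / \<rho>" using assms by (simp add: n1_scale)
  also have "\<dots> \<le> 1" using h assms by simp
  finally have "?u \<in> {y. n1 (y - 0) \<le> 1}" by simp
  moreover have "y = \<rho> *\<^sub>R ?u + w" using assms by simp
  ultimately show "y \<in> (\<lambda>y. \<rho> *\<^sub>R y + w) ` {y. n1 (y - 0) \<le> 1}" by blast
next
  fix y assume "y \<in> (\<lambda>y. \<rho> *\<^sub>R y + w) ` {y::real^'n. n1 (y - 0) \<le> 1}"
  then obtain u where u: "n1 u \<le> 1" "y = \<rho> *\<^sub>R u + w" by auto
  then have "n1 (y - w) = \<rho> * n1 u" using assms by (simp add: n1_scale)
  also have "\<dots> \<le> \<rho>" using u assms by (simp add: mult_left_le)
  finally show "y \<in> {y. n1 (y - w) \<le> \<rho>}" by simp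
qed

lemma meas_lp1:
  assumes "\<rho> > 0"
  shows "measure lborel {y::real^'n. n1 (y - w) \<le> \<rho>} = \<rho> ^ CARD('n) * lp_vol 1 TYPE('n)"
proof -
  have b1: "{y::real^'n. n1 (y - w) \<le> \<rho>} \<in> sets borel" by (rule borel_closed, rule closed_lp1)
  have b0: "{y::real^'n. n1 (y - 0) \<le> 1} \<in> sets borel" by (rule borel_closed, rule closed_lp1)
  have "measure lborel {y::real^'n. n1 (y - w) \<le> \<rho>} = measure lebesgue {y::real^'n. n1 (y - w) \<le> \<rho>}"
    using b1 by simp
  also have "\<dots> = measure lebesgue ((\<lambda>y. \<rho> *\<^sub>R y + w) ` {y::real^'n. n1 (y - 0) \<le> 1})"
    using lp1_scale[OF assms] by metis
  also have "\<dots> = \<bar>\<rho>\<bar> ^ DIM(real^'n) * measure lebesgue {y::real^'n. n1 (y - 0) \<le> 1}"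
    by (rule measure_lebesgue_affine)
  also have "\<dots> = \<rho> ^ CARD('n) * measure lborel {y::real^'n. n1 (y - 0) \<le> 1}"
    using b0 assms by simp
  also have "{y::real^'n. n1 (y - 0) \<le> 1} = lp_ball 1 0 1" by (rule lp1[of 1 0, symmetric]) simp
  finally show ?thesis unfolding lp_vol_def by (simp only:)
qed

theorem lemmaC1:
  fixes z x :: "real^'n::finite" and R r :: real
  assumes "R > 0" and "x \<in> lp_ball 1 z R"
    and "0 \<le> r" and "r \<le> 2 * R / (real CARD('n) + 2)"
  shows "measure lborel (lp_ball 1 z R \<inter> lp_ball 2 x r)
    \<ge> lp_vol 1 TYPE('n) / (lp_vol 2 TYPE('n) * 2 ^ CARD('n)) * measure lborel (lp_ball 2 x r)"
proof -
  let ?d = "CARD('n)"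
  have V2: "lp_vol 2 TYPE('n) = unit_ball_vol ?d"
    proof -
    have "lp_ball 2 (0::real^'n) 1 = cball 0 1" by (rule lp2) simp
    then show ?thesis unfolding lp_vol_def using content_cball[of 1 "0::real^'n"] by simp
  qed
  have M2: "measure lborel (lp_ball 2 x r) = unit_ball_vol ?d * r ^ ?d"
    unfolding lp2[OF assms(3)] using content_cball[OF assms(3), of x] by simp
  have V2pos: "unit_ball_vol ?d > 0" by simp
  have RHS: "lp_vol 1 TYPE('n) / (lp_vol 2 TYPE('n) * 2 ^ ?d) * measure lborel (lp_ball 2 x r)
       = (r/2) ^ ?d * lp_vol 1 TYPE('n)"
    unfolding V2 M2 using V2pos by (simp add: power_divide field_simps less_imp_neq[OF V2pos, symmetric])
  show ?thesis
  proof (cases "r = 0")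
    case True
    then show ?thesis unfolding RHS by (simp add: zero_power)
  next
    case False
    then have rpos: "r > 0" using assms(3) by simp
    have "2 * R / (real ?d + 2) \<le> 2 * R" using assms(1)
      by (simp add: divide_le_eq)
    then have r2R: "r \<le> 2 * R" using assms(4) by linarith
    define t where "t = r / (2 * R)"
    have t0: "0 \<le> t" and t1: "t \<le> 1" using r2R assms(1) rpos by (auto simp: t_def)
    have tR: "t * R = r / 2" using assms(1) by (simp add: t_def)
    define w where "w = x + t *\<^sub>R (z - x)"
    have xz: "n1 (x - z) \<le> R" using assms(2) lp1[of R z] assms(1) by simp
    let ?A = "{y::real^'n. n1 (y - w) \<le> r / 2}"
    let ?I = "lp_ball 1 z R \<inter> lp_ball 2 x r"
    have sub: "?A \<subseteq> ?I"
    proof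
      fix y assume "y \<in> ?A"
      then have hy: "n1 (y - w) \<le> r / 2" by simp
      have wz: "w - z = (1 - t) *\<^sub>R (x - z)" unfolding w_def by (simp add: algebra_simps)
      have wx: "w - x = t *\<^sub>R (z - x)" unfolding w_def by simp
      have "n1 (y - z) \<le> n1 (y - w) + n1 (w - z)"
        using n1_add[of "y - w" "w - z"] by simp
      also have "\<dots> \<le> r/2 + (1 - t) * R"
        unfolding wz n1_scale using hy mult_left_mono[OF xz, of "1-t"] t1 by simp
      also have "\<dots> = R" using tR by (simp add: algebra_simps)
      finally have y1: "y \<in> lp_ball 1 z R" using lp1[of R z] assms(1) by simp
      have "norm (y - x) \<le> norm (y - w) + norm (w - x)"
        using norm_triangle_ineq[of "y - w" "w - x"] by simp
      also have "\<dots> \<le> n1 (y - w) + n1 (w - x)" using norm_le_n1 add_mono by blast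
      also have "\<dots> \<le> r/2 + t * R"
        unfolding wx n1_scale using hy mult_left_mono[OF xz t0] t0 n1_minus[of z x] by simp
      finally have "norm (y - x) \<le> r" using tR by simp
      then have "y \<in> cball x r" by (simp add: dist_norm norm_minus_commute)
      then show "y \<in> ?I" using y1 unfolding lp2[OF assms(3)] by simp
    qed
    have cI: "compact ?I"
      unfolding lp2[OF assms(3)] lp1[OF less_imp_le[OF assms(1)]]
      by (intro closed_Int_compact closed_lp1 compact_cball)
    have "measure lborel ?A \<le> measure lborel ?I"
      by (rule measure_mono_fmeasurable[OF sub]) (simp_all only: sets_lborel borel_closed[OF closed_lp1] fmeasurable_compact[OF cI])
    moreover have "measure lborel ?A = (r/2) ^ ?d * lp_vol 1 TYPE('n)"
      by (rule meas_lp1) (simp add: rpos)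
    ultimately show ?thesis unfolding RHS by simp
  qed
qed

end
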